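(* Let $d\ge2$ and let $\mathbf{p}^\star=(1,p_2^\star,\dots,p_d^\star)$ be a maximizer of the problem $$\max\Big\{\frac{\prod_{i=1}^dp_i}{D_1(\mathbf{p})^d}\;:\;\mathbf{p}\in(0,\infty)^d,\ p_1=1,\ D_1(\mathbf{p})^2\ge D_j(\mathbf{p})^2\text{ for all }j\in\{2,\dots,d\}\Big\}.$$ Then there exists a unique $k\in\{2,\dots,d\}$ such that $D_k(\mathbf{p}^\star)=D_1(\mathbf{p}^\star)=D(\mathbf{p}^\star)$, and, writing $D_k=D_k(\mathbf{p}^\star)$, $$p_j^\star=\begin{cases}\dfrac{\sqrt2\,D_k}{(j-1)\sqrt{dk}}\sqrt{\dfrac{2k-1}{k-1}}, & j\in\{2,\dots,k-1\},\\[2mm] \dfrac{D_k}{\sqrt{dk}}, & j=k,\\[2mm] \dfrac{D_k}{(j-1)\sqrt d}, & j\in\{k+1,\dots,d\}.\end{cases}$$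
   Context: For $k\in\{1,\dots,d\}$ let $w_{k,i}=0$ for $i<k$, $w_{k,k}=k$, $w_{k,i}=i-1$ for $k<i\le d$, $D_k(\mathbf{p})=\sqrt{\sum_{i=1}^dw_{k,i}^2p_i^2}$, and $D(\mathbf{p})=\max_{k\in\{1,\dots,d\}}D_k(\mathbf{p})$. *)

theory Defs
  imports Complex_Main
begin

text \<open>Vectors p in (0,inf)^d are represented as functions nat => real, indices 1..d.\<close>

definition wt :: "nat \<Rightarrow> nat \<Rightarrow> real" where
  "wt k i = (if i < k then 0 else if i = k then real k else real i - 1)"

definition Dk :: "nat \<Rightarrow> (nat \<Rightarrow> real) \<Rightarrow> nat \<Rightarrow> real" where
  "Dk d p k = sqrt (\<Sum>i=1..d. (wt k i)^2 * (p i)^2)"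

definition Dmax :: "nat \<Rightarrow> (nat \<Rightarrow> real) \<Rightarrow> real" where
  "Dmax d p = Max ((Dk d p) ` {1..d})"

definition feasible :: "nat \<Rightarrow> (nat \<Rightarrow> real) \<Rightarrow> bool" where
  "feasible d p \<longleftrightarrow> (\<forall>i\<in>{1..d}. p i > 0) \<and> p 1 = 1 \<and>
     (\<forall>j\<in>{2..d}. (Dk d p 1)^2 \<ge> (Dk d p j)^2)"

definition objective :: "nat \<Rightarrow> (nat \<Rightarrow> real) \<Rightarrow> real" where
  "objective d p = (\<Prod>i=1..d. p i) / (Dk d p 1) ^ d"

end

theory Submission
  imports Defs
begin


lemma Dk_sq:
  assumes "1 \<le> j" "j \<le> d"
  shows "(Dk d p j)^2 = (real j)^2 * (p j)^2 + (\<Sum>i\<in>{j<..d}. (real i - 1)^2 * (p i)^2)"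
proof -
  have nn: "0 \<le> (\<Sum>i=1..d. (wt j i)^2 * (p i)^2)" by (intro sum_nonneg) auto
  have split: "{1..d} = {1..<j} \<union> insert j {j<..d}" using assms by auto
  have "(\<Sum>i=1..d. (wt j i)^2 * (p i)^2) = (\<Sum>i\<in>{1..<j}. (wt j i)^2 * (p i)^2) + (\<Sum>i\<in>insert j {j<..d}. (wt j i)^2 * (p i)^2)"
    unfolding split by (rule sum.union_disjoint) auto
  also have "(\<Sum>i\<in>{1..<j}. (wt j i)^2 * (p i)^2) = 0" by (intro sum.neutral) (auto simp: wt_def)
  also have "(\<Sum>i\<in>insert j {j<..d}. (wt j i)^2 * (p i)^2) = (real j)^2 * (p j)^2 + (\<Sum>i\<in>{j<..d}. (wt j i)^2 * (p i)^2)"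
    by (simp add: wt_def)
  also have "(\<Sum>i\<in>{j<..d}. (wt j i)^2 * (p i)^2) = (\<Sum>i\<in>{j<..d}. (real i - 1)^2 * (p i)^2)"
    by (intro sum.cong) (auto simp: wt_def)
  finally show ?thesis using nn by (simp add: Dk_def)
qed

lemma S_form:
  assumes "d \<ge> 2" "p 1 = 1"
  shows "(Dk d p 1)^2 = 1 + (p 2)^2 + (\<Sum>i\<in>{2<..d}. (real i - 1)^2 * (p i)^2)"
proof -
  have "{1<..d} = insert 2 {2<..d}" using assms by auto
  thus ?thesis using Dk_sq[of 1 d p] assms by simp
qed

lemma D2_form:
  assumes "d \<ge> 2"
  shows "(Dk d p 2)^2 = 4 * (p 2)^2 + (\<Sum>i\<in>{2<..d}. (real i - 1)^2 * (p i)^2)"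
  using Dk_sq[of 2 d p] assms by simp

lemma split_set: "(d::nat) \<ge> 2 \<Longrightarrow> {1..d} = insert 1 (insert 2 {2<..d})" by auto

lemma obj_sq:
  assumes "d \<ge> 2" "p 1 = 1"
  shows "(objective d p)^2 * (\<Prod>i\<in>{2<..d}. (real i - 1)^2)
     = (p 2)^2 * (\<Prod>i\<in>{2<..d}. (real i - 1)^2 * (p i)^2) / ((Dk d p 1)^2)^d"
proof -
  have pr: "(\<Prod>i=1..d. p i) = p 2 * (\<Prod>i\<in>{2<..d}. p i)"
    using assms by (simp only: split_set) simp
  have "(objective d p)^2 = (p 2)^2 * (\<Prod>i\<in>{2<..d}. (p i)^2) / ((Dk d p 1)^2)^d"
    unfolding objective_def pr by (simp add: power_divide power_mult_distrib prod_power_distrib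
        power_mult[symmetric] mult.commute)
  moreover have "(\<Prod>i\<in>{2<..d}. (real i - 1)^2 * (p i)^2) = (\<Prod>i\<in>{2<..d}. (real i - 1)^2) * (\<Prod>i\<in>{2<..d}. (p i)^2)"
    by (simp add: prod.distrib)
  ultimately show ?thesis by simp
qed



lemma amgm:
  fixes y :: "nat \<Rightarrow> real"
  assumes fin: "finite A" "A \<noteq> {}" and pos: "\<forall>i\<in>A. y i > 0"
  shows "(\<Prod>i\<in>A. y i) \<le> ((\<Sum>i\<in>A. y i) / card A) ^ card A"
    and "(\<Prod>i\<in>A. y i) = ((\<Sum>i\<in>A. y i) / card A) ^ card A \<Longrightarrow> \<forall>i\<in>A. y i = (\<Sum>i\<in>A. y i) / card A"
proof -
  define m where "m = (\<Sum>i\<in>A. y i) / card A"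
  have n: "card A > 0" using fin by (simp add: card_gt_0_iff)
  have "(\<Sum>i\<in>A. y i) > 0" using fin pos by (intro sum_pos) auto
  hence m: "m > 0" using n by (simp add: m_def)
  define g where "g i = y i / m - 1 - ln (y i / m)" for i
  have g0: "\<forall>i\<in>A. g i \<ge> 0" using pos m ln_le_minus_one[of "y _ / m"] by (auto simp: g_def)
  have lp: "ln (\<Prod>i\<in>A. y i) = (\<Sum>i\<in>A. ln (y i))" using fin pos by (intro ln_prod) auto
  have "(\<Sum>i\<in>A. g i) = (\<Sum>i\<in>A. y i) / m - card A - ((\<Sum>i\<in>A. ln (y i)) - card A * ln m)"
    using pos m by (simp add: g_def sum_subtractf sum_divide_distrib[symmetric] ln_divide_pos)
  also have "(\<Sum>i\<in>A. y i) / m = card A" using m n \<open>(\<Sum>i\<in>A. y i) > 0\<close> by (simp add: m_def)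
  finally have sg: "(\<Sum>i\<in>A. g i) = card A * ln m - ln (\<Prod>i\<in>A. y i)" using lp by simp
  have pp: "(\<Prod>i\<in>A. y i) > 0" using pos by (intro prod_pos) auto
  have lm: "ln (m ^ card A) = card A * ln m" using m by (simp add: ln_realpow)
  have "ln (\<Prod>i\<in>A. y i) \<le> ln (m ^ card A)" using sg lm sum_nonneg[of A g] g0 by simp
  thus "(\<Prod>i\<in>A. y i) \<le> ((\<Sum>i\<in>A. y i) / card A) ^ card A" using pp m by (simp add: m_def[symmetric])
  assume eq: "(\<Prod>i\<in>A. y i) = ((\<Sum>i\<in>A. y i) / card A) ^ card A"
  hence "(\<Sum>i\<in>A. g i) = 0" using sg lm by (simp add: m_def[symmetric])
  hence "\<forall>i\<in>A. g i = 0" using sum_nonneg_eq_0_iff[of A g] fin g0 by auto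
  hence "\<forall>i\<in>A. y i / m = 1" using pos m ln_eq_minus_one[of "y _ / m"] by (auto simp: g_def)
  thus "\<forall>i\<in>A. y i = (\<Sum>i\<in>A. y i) / card A" using m by (simp add: m_def[symmetric])
qed



lemma bound:
  fixes q :: "nat \<Rightarrow> real"
  assumes d: "d \<ge> 2" and f: "feasible d q"
  defines "a \<equiv> (q 2)^2" and "R \<equiv> (\<Sum>i\<in>{2<..d}. (real i - 1)^2 * (q i)^2)"
    and "P \<equiv> (\<Prod>i\<in>{2<..d}. (real i - 1)^2 * (q i)^2)" and "S \<equiv> (Dk d q 1)^2"
    and "u \<equiv> 2 * sqrt ((q 2)^2/3)"
  shows "S = 1 + a + R" "3*a \<le> 1" "a > 0" "u^2 = 4*a/3" "2*u \<le> 1 + a" "R \<ge> 0"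
    "u^2 * P \<le> ((2*u+R)/d)^d" "((2*u+R)/d)^d \<le> (S/d)^d"
    "u^2 * P = ((2*u+R)/d)^d \<Longrightarrow> u = (2*u+R)/d \<and> (\<forall>i\<in>{2<..d}. (real i - 1)^2 * (q i)^2 = (2*u+R)/d)"
proof -
  have q1: "q 1 = 1" and qpos: "\<forall>i\<in>{1..d}. q i > 0" and con: "\<forall>j\<in>{2..d}. (Dk d q 1)^2 \<ge> (Dk d q j)^2"
    using f by (auto simp: feasible_def)
  show S: "S = 1 + a + R" using S_form[of d q, OF d q1] by (simp add: S_def a_def R_def)
  have "(Dk d q 2)^2 \<le> S" using con d by (auto simp: S_def)
  thus a3: "3*a \<le> 1" using D2_form[OF d, of q] S by (simp add: a_def R_def)
  show apos: "a > 0" using qpos d unfolding a_def by (metis atLeastAtMost_iff less_numeral_extra(3) one_le_numeral zero_less_power2)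
  show u2: "u^2 = 4*a/3" using apos by (simp add: u_def a_def power_mult_distrib)
  have upos: "u > 0" using apos by (simp add: u_def a_def)
  have e1: "3*(1+a)^2 - 16*a = (1 - 3*a)*(3 - a)" by algebra
  have e2: "(1 - 3*a)*(3 - a) \<ge> 0" using a3 by (intro mult_nonneg_nonneg) auto
  have e3: "(2*u)^2 = 16*a/3" using u2 by (simp add: power_mult_distrib)
  have "(2*u)^2 \<le> (1+a)^2" using e1 e2 e3 by linarith
  thus u1: "2*u \<le> 1 + a" by (rule power2_le_imp_le) (use apos in linarith)
  show R0: "R \<ge> 0" unfolding R_def by (intro sum_nonneg) auto
  define y where "y i = (if i \<le> 2 then u else (real i - 1)^2 * (q i)^2)" for i
  have ypos: "\<forall>i\<in>{1..d}. y i > 0" using qpos upos by (auto simp: y_def)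
  have ys: "(\<Sum>i\<in>{1..d}. y i) = 2*u + R"
  proof -
    have "(\<Sum>i\<in>{2<..d}. y i) = R" unfolding R_def by (intro sum.cong) (auto simp: y_def)
    thus ?thesis using d by (simp only: split_set) (simp add: y_def)
  qed
  have yp: "(\<Prod>i\<in>{1..d}. y i) = u^2 * P"
  proof -
    have "(\<Prod>i\<in>{2<..d}. y i) = P" unfolding P_def by (intro prod.cong) (auto simp: y_def)
    thus ?thesis using d by (simp only: split_set) (simp add: y_def power2_eq_square)
  qed
  have ne: "{1..d} \<noteq> {}" using d by auto
  show "u^2 * P \<le> ((2*u+R)/d)^d" using amgm(1)[of "{1..d}" y] ypos ne ys yp by simp
  show "((2*u+R)/d)^d \<le> (S/d)^d" using S u1 upos R0 by (intro power_mono divide_right_mono) auto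
  assume eq: "u^2 * P = ((2*u+R)/d)^d"
  have cd: "card {1..d} = d" by simp
  have eqm: "(\<Prod>i\<in>{1..d}. y i) = ((\<Sum>i\<in>{1..d}. y i) / card {1..d}) ^ card {1..d}"
    unfolding cd ys yp by (rule eq)
  have all: "\<forall>i\<in>{1..d}. y i = (\<Sum>i\<in>{1..d}. y i) / card {1..d}"
    by (rule amgm(2)[OF _ ne ypos eqm]) simp
  hence all2: "\<And>i. i \<in> {1..d} \<Longrightarrow> y i = (2*u+R)/d" unfolding cd ys by blast
  have y1: "y 1 = u" by (simp add: y_def)
  have "y 1 = (2*u+R)/d" by (rule all2) (use d in simp)
  hence A: "u = (2*u+R)/d" using y1 by linarith
  have B: "(real i - 1)^2 * (q i)^2 = (2*u+R)/d" if "i \<in> {2<..d}" for i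
  proof -
    have "y i = (real i - 1)^2 * (q i)^2" using that by (simp add: y_def)
    moreover have "y i = (2*u+R)/d" by (rule all2) (use that in auto)
    ultimately show ?thesis by linarith
  qed
  show "u = (2*u+R)/d \<and> (\<forall>i\<in>{2<..d}. (real i - 1)^2 * (q i)^2 = (2*u+R)/d)"
    using A B by blast
qed




lemma jlt: assumes "(j::nat) \<ge> 3" shows "real j < (real j - 1)^2"
proof -
  have "(real j - 1)^2 - real j = real j * (real j - 3) + 1" by (simp add: power2_eq_square algebra_simps)
  moreover have "real j * (real j - 3) \<ge> 0" using assms by simp
  ultimately show ?thesis by linarith
qed

lemma Dvals:
  fixes d :: nat and q :: "nat \<Rightarrow> real"
  assumes d: "d \<ge> 2" and q1: "q 1 = 1" and q2: "(q 2)^2 = 1/3"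
    and xi0: "\<forall>i\<in>{2<..d}. (real i - 1)^2 * (q i)^2 = 2/3"
  shows "(Dk d q 1)^2 = 2 * real d / 3" "(Dk d q 2)^2 = 2 * real d / 3"
    "\<And>j. j \<in> {3..d} \<Longrightarrow> (Dk d q j)^2 < 2 * real d / 3"
proof -
  have xi: "(real i - 1)^2 * (q i)^2 = 2/3" if "i \<in> {2<..d}" for i using xi0 that by blast
  have Rv: "(\<Sum>i\<in>{j<..d}. (real i - 1)^2 * (q i)^2) = (real d - real j) * (2/3)" if "j \<ge> 2" "j \<le> d" for j
  proof -
    have "(\<Sum>i\<in>{j<..d}. (real i - 1)^2 * (q i)^2) = (\<Sum>i\<in>{j<..d}. 2/3)"
      by (rule sum.cong[OF refl], rule xi) (use that in auto)
    thus ?thesis using that by (simp add: of_nat_diff)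
  qed
  show "(Dk d q 1)^2 = 2 * real d / 3" using S_form[of d q] d q1 Rv[of 2] q2 by (simp add: field_simps)
  show "(Dk d q 2)^2 = 2 * real d / 3" using D2_form[of d q] d Rv[of 2] q2 by (simp add: field_simps)
  fix j assume "j \<in> {3..d}"
  hence j3: "j \<ge> 3" "j \<le> d" by auto
  have pos: "(real j - 1)^2 > 0" using j3 by simp
  have "(q j)^2 = (2/3) / (real j - 1)^2" using xi[of j] j3 pos by (simp add: field_simps)
  hence "(real j)^2 * (q j)^2 = real j * (real j / (real j - 1)^2) * (2/3)" by (simp add: power2_eq_square)
  also have "\<dots> < real j * 1 * (2/3)"
    using jlt[OF j3(1)] pos j3 by (intro mult_strict_right_mono mult_strict_left_mono) auto
  finally show "(Dk d q j)^2 < 2 * real d / 3" using Dk_sq[of j d q] j3 Rv[of j] by (simp add: field_simps)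
qed



lemma cand_feasible:
  fixes d :: nat assumes d: "d \<ge> 2"
  defines "q \<equiv> (\<lambda>i::nat. if i = 1 then 1 else if i = 2 then 1 / sqrt 3 else sqrt (2/3) / (real i - 1))"
  shows "feasible d q" and "(objective d q)^2 * (\<Prod>i\<in>{2<..d}. (real i - 1)^2) = 3 / (4 * real d ^ d)"
proof -
  have xi: "(real i - 1)^2 * (q i)^2 = 2/3" if "i \<in> {2<..d}" for i
    using that by (auto simp: q_def power_divide)
  have q2: "(q 2)^2 = 1/3" by (simp add: q_def power_divide)
  have q1: "q 1 = 1" by (simp add: q_def)
  have xi0: "\<forall>i\<in>{2<..d}. (real i - 1)^2 * (q i)^2 = 2/3" using xi by blast
  note D = Dvals[of d q, OF d q1 q2 xi0]
  have "(Dk d q j)^2 \<le> (Dk d q 1)^2" if "j \<in> {2..d}" for j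
  proof (cases "j = 2")
    case True thus ?thesis using D(1,2) by simp
  next
    case False hence "j \<in> {3..d}" using that by auto
    thus ?thesis using D(1) D(3)[of j] by linarith
  qed
  thus "feasible d q" unfolding feasible_def by (auto simp: q_def)
  have P: "(\<Prod>i\<in>{2<..d}. (real i - 1)^2 * (q i)^2) = (2/3)^(d-2)"
  proof -
    have "(\<Prod>i\<in>{2<..d}. (real i - 1)^2 * (q i)^2) = (\<Prod>i\<in>{2<..d}. 2/3)"
      by (rule prod.cong[OF refl], rule xi)
    thus ?thesis by simp
  qed
  have "(2 * real d / 3)^d = (2/3)^(d-2) * (2/3)^2 * real d ^ d"
  proof -
    have "d = (d-2) + 2" using d by simp
    hence "(2/3::real)^d = (2/3)^(d-2) * (2/3)^2" by (metis power_add)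
    moreover have "(2 * real d / 3)^d = (2/3)^d * real d ^ d" by (simp add: power_mult_distrib[symmetric])
    ultimately show ?thesis by simp
  qed
  thus "(objective d q)^2 * (\<Prod>i\<in>{2<..d}. (real i - 1)^2) = 3 / (4 * real d ^ d)"
  proof -
    have "(objective d q)^2 * (\<Prod>i\<in>{2<..d}. (real i - 1)^2) = (1/3) * (2/3)^(d-2) / (2 * real d / 3)^d"
    proof -
      have "(objective d q)^2 * (\<Prod>i\<in>{2<..d}. (real i - 1)^2) = (q 2)^2 * (\<Prod>i\<in>{2<..d}. (real i - 1)^2 * (q i)^2) / ((Dk d q 1)^2)^d"
        by (rule obj_sq[of d q, OF d q1])
      also have "\<dots> = (1/3) * (2/3)^(d-2) / (2 * real d / 3)^d" by (simp only: P q2 D(1))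
      finally show ?thesis .
    qed
    also have "\<dots> = 3 / (4 * real d ^ d)" using \<open>(2 * real d / 3)^d = _\<close> d by (simp add: field_simps)
    finally show ?thesis .
  qed
qed




lemma Dk_nonneg: "Dk d p k \<ge> 0"
  unfolding Dk_def by (intro real_sqrt_ge_zero sum_nonneg) auto

lemma obj_nonneg: "feasible d p \<Longrightarrow> objective d p \<ge> 0"
  unfolding objective_def feasible_def
  by (intro divide_nonneg_nonneg prod_nonneg zero_le_power Dk_nonneg) (auto simp: less_imp_le)

lemma fin:
  fixes d :: nat and p :: "nat \<Rightarrow> real"
  assumes d: "d \<ge> 2" and p1: "p 1 = 1" and ppos: "\<forall>i\<in>{1..d}. p i > 0" and p2: "(p 2)^2 = 1/3"
    and xi0: "\<forall>i\<in>{2<..d}. (real i - 1)^2 * (p i)^2 = 2/3"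
  shows "(\<exists>!k. k \<in> {2..d} \<and> Dk d p k = Dk d p 1 \<and> Dk d p 1 = Dmax d p) \<and>
    (\<forall>k\<in>{2..d}. Dk d p k = Dk d p 1 \<and> Dk d p 1 = Dmax d p \<longrightarrow>
      (\<forall>j\<in>{2..d}. p j =
        (if j < k then sqrt 2 * Dk d p k / ((real j - 1) * sqrt (real d * real k))
                        * sqrt ((2 * real k - 1) / (real k - 1))
         else if j = k then Dk d p k / sqrt (real d * real k)
         else Dk d p k / ((real j - 1) * sqrt (real d)))))"
proof -
  have xi: "(real i - 1)^2 * (p i)^2 = 2/3" if "i \<in> {2<..d}" for i using xi0 that by blast
  note D = Dvals[of d p, OF d p1 p2 xi0]
  have D1: "Dk d p 1 = sqrt (2 * real d / 3)" using D(1) Dk_nonneg[of d p 1] by (metis real_sqrt_unique)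
  have D2: "Dk d p 2 = sqrt (2 * real d / 3)" using D(2) Dk_nonneg[of d p 2] by (metis real_sqrt_unique)
  have Dlt: "Dk d p j < Dk d p 1" if "j \<in> {3..d}" for j
    using D(3)[OF that] D(1) Dk_nonneg[of d p 1] by (metis power_less_imp_less_base)
  have Dmax: "Dmax d p = Dk d p 1"
    unfolding Dmax_def
  proof (rule Max_eqI)
    show "finite (Dk d p ` {1..d})" by simp
    show "Dk d p 1 \<in> Dk d p ` {1..d}" using d by auto
    fix y assume "y \<in> Dk d p ` {1..d}"
    then obtain k where k: "k \<in> {1..d}" "y = Dk d p k" by auto
    show "y \<le> Dk d p 1"
    proof (cases "k \<le> 2")
      case True
      hence "k = 1 \<or> k = 2" using k by auto
      thus ?thesis using k D1 D2 by auto
    next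
      case False thus ?thesis using k Dlt[of k] by auto
    qed
  qed
  have keq: "k = 2" if "k \<in> {2..d}" "Dk d p k = Dk d p 1" for k
  proof (rule ccontr)
    assume "k \<noteq> 2"
    hence "k \<in> {3..d}" using that by auto
    thus False using Dlt[of k] that by simp
  qed
  have ex: "\<exists>!k. k \<in> {2..d} \<and> Dk d p k = Dk d p 1 \<and> Dk d p 1 = Dmax d p"
  proof (rule ex1I[of _ 2])
    show "2 \<in> {2..d} \<and> Dk d p 2 = Dk d p 1 \<and> Dk d p 1 = Dmax d p" using d D1 D2 Dmax by auto
    fix k assume "k \<in> {2..d} \<and> Dk d p k = Dk d p 1 \<and> Dk d p 1 = Dmax d p"
    thus "k = 2" using keq by blast
  qed
  have dp: "real d > 0" using d by simp
  have "(2 * real d / 3) / (real d * 2) = 1/3" using dp by (simp add: field_simps)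
  hence s1: "sqrt (2 * real d / 3) / sqrt (real d * 2) = sqrt (1/3)" by (metis real_sqrt_divide)
  have "(2 * real d / 3) / (real d) = 2/3" using dp by (simp add: field_simps)
  hence s2: "sqrt (2 * real d / 3) / sqrt (real d) = sqrt (2/3)" by (metis real_sqrt_divide)
  have p2pos: "p 2 > 0" using ppos d by (metis atLeastAtMost_iff one_le_numeral)
  have pv2: "p 2 = sqrt (1/3)" using p2 p2pos by (intro real_sqrt_unique[symmetric]) auto
  have pvj: "p j = sqrt (2/3) / (real j - 1)" if "j \<in> {2<..d}" for j
  proof -
    have jp: "real j - 1 > 0" using that by auto
    have sq: "((real j - 1) * p j)^2 = 2/3" using xi[OF that] by (simp add: power_mult_distrib)
    have "p j > 0" using ppos that by auto
    hence "(real j - 1) * p j \<ge> 0" using jp by simp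
    hence "sqrt (2/3) = (real j - 1) * p j" using real_sqrt_unique[OF sq] by blast
    thus ?thesis using jp by (simp add: field_simps)
  qed
  show ?thesis
  proof (intro conjI ex ballI impI)
    fix k j assume k: "k \<in> {2..d}" and c: "Dk d p k = Dk d p 1 \<and> Dk d p 1 = Dmax d p" and j: "j \<in> {2..d}"
    have k2: "k = 2" using keq k c by blast
    show "p j = (if j < k then sqrt 2 * Dk d p k / ((real j - 1) * sqrt (real d * real k))
                        * sqrt ((2 * real k - 1) / (real k - 1))
         else if j = k then Dk d p k / sqrt (real d * real k)
         else Dk d p k / ((real j - 1) * sqrt (real d)))"
    proof (cases "j = 2")
      case True thus ?thesis using k2 D2 s1 pv2 by simp
    next
      case False
      hence jj: "j \<in> {2<..d}" using j by auto
      have "Dk d p k / ((real j - 1) * sqrt (real d)) = (sqrt (2 * real d / 3) / sqrt (real d)) / (real j - 1)"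
        using k2 D2 by (simp add: divide_divide_eq_left ac_simps)
      hence "Dk d p k / ((real j - 1) * sqrt (real d)) = sqrt (2/3) / (real j - 1)" using s2 by simp
      thus ?thesis using k2 False j pvj[OF jj] by simp
    qed
  qed
qed




theorem corollary1:
  fixes d :: nat and p :: "nat \<Rightarrow> real"
  assumes "d \<ge> 2"
    and "feasible d p"
    and "\<forall>q. feasible d q \<longrightarrow> objective d q \<le> objective d p"
  shows "(\<exists>!k. k \<in> {2..d} \<and> Dk d p k = Dk d p 1 \<and> Dk d p 1 = Dmax d p) \<and>
    (\<forall>k\<in>{2..d}. Dk d p k = Dk d p 1 \<and> Dk d p 1 = Dmax d p \<longrightarrow>
      (\<forall>j\<in>{2..d}. p j =
        (if j < k then sqrt 2 * Dk d p k / ((real j - 1) * sqrt (real d * real k))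
                        * sqrt ((2 * real k - 1) / (real k - 1))
         else if j = k then Dk d p k / sqrt (real d * real k)
         else Dk d p k / ((real j - 1) * sqrt (real d)))))"
proof -
  have d: "d \<ge> 2" and fp: "feasible d p" and opt: "\<forall>q. feasible d q \<longrightarrow> objective d q \<le> objective d p"
    using assms by auto
  have p1: "p 1 = 1" and ppos: "\<forall>i\<in>{1..d}. p i > 0" using fp by (auto simp: feasible_def)
  define a where "a = (p 2)^2"
  define R where "R = (\<Sum>i\<in>{2<..d}. (real i - 1)^2 * (p i)^2)"
  define P where "P = (\<Prod>i\<in>{2<..d}. (real i - 1)^2 * (p i)^2)"
  define S where "S = (Dk d p 1)^2"
  define u where "u = 2 * sqrt (a/3)"
  define M where "M = ((2*u+R)/d)^d"
  define K where "K = (\<Prod>i\<in>{2<..d}. (real i - 1)^2)"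
  note bd = bound[of d p, OF d fp, folded R_def P_def S_def a_def, folded u_def, folded M_def]
  have Seq: "S = 1 + a + R" by (rule bd(1))
  have a3: "3*a \<le> 1" by (rule bd(2))
  have apos: "a > 0" by (rule bd(3))
  have u2: "u^2 = 4*a/3" by (rule bd(4))
  have u1: "2*u \<le> 1 + a" by (rule bd(5))
  have R0: "R \<ge> 0" by (rule bd(6))
  have b1: "u^2 * P \<le> M" by (rule bd(7))
  have b2: "M \<le> (S/d)^d" by (rule bd(8))
  have beq: "u^2 * P = M \<Longrightarrow> u = (2*u+R)/d \<and> (\<forall>i\<in>{2<..d}. (real i - 1)^2 * (p i)^2 = (2*u+R)/d)"
    by (rule bd(9))
  have Kpos: "K > 0" unfolding K_def by (intro prod_pos) auto
  have Spos: "S > 0" using Seq apos R0 by linarith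
  have dp: "real d > 0" using d by simp
  note cf = cand_feasible[OF d]
  have "objective d (\<lambda>i::nat. if i = 1 then 1 else if i = 2 then 1 / sqrt 3 else sqrt (2/3) / (real i - 1)) \<le> objective d p"
    using opt cf(1) by blast
  hence "(objective d (\<lambda>i::nat. if i = 1 then 1 else if i = 2 then 1 / sqrt 3 else sqrt (2/3) / (real i - 1)))^2 \<le> (objective d p)^2"
    using obj_nonneg[OF cf(1)] by (rule power_mono)
  hence "(objective d (\<lambda>i::nat. if i = 1 then 1 else if i = 2 then 1 / sqrt 3 else sqrt (2/3) / (real i - 1)))^2 * K \<le> (objective d p)^2 * K"
    using Kpos by (intro mult_right_mono) auto
  hence le1: "3 / (4 * real d ^ d) \<le> a * P / S^d"
    using cf(2) obj_sq[of d p, OF d p1, folded R_def P_def S_def a_def K_def] by (simp add: K_def)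
  have Sd: "S^d > 0" using Spos by simp
  have dd: "real d ^ d > 0" using dp by simp
  have "3 * S^d \<le> 4 * real d ^ d * (a * P)"
    using le1 Sd dd by (simp add: field_simps)
  moreover have "u^2 * P * real d^d = (4 * real d^d * (a*P))/3" unfolding u2 by simp
  ultimately have "S^d \<le> u^2 * P * real d^d" by linarith
  hence "(S/d)^d \<le> u^2 * P" using dd by (simp add: power_divide pos_divide_le_eq)
  hence eq1: "u^2 * P = M" and eq2: "M = (S/d)^d" using b1 b2 by linarith+
  have "(2*u+R)/d = S/d"
  proof (rule power_eq_imp_eq_base[of _ d])
    show "((2*u+R)/d)^d = (S/d)^d" using eq2 by (simp add: M_def)
    have u0: "u \<ge> 0" unfolding u_def using apos by simp
    show "0 \<le> (2*u+R)/d" using u0 R0 dp by simp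
    show "0 \<le> S/d" using Spos dp by simp
    show "0 < d" using d by simp
  qed
  hence "2*u + R = S" using dp by (simp add: field_simps)
  hence u1': "2*u = 1 + a" using Seq by linarith
  hence "(2*u)^2 = (1+a)^2" by simp
  hence "16*a/3 = (1+a)^2" using u2 by (simp add: power_mult_distrib)
  moreover have "3*(1+a)^2 - 16*a = (1 - 3*a)*(3 - a)" by algebra
  ultimately have "(1 - 3*a)*(3 - a) = 0" by linarith
  moreover have "3 - a \<noteq> 0" using a3 by linarith
  ultimately have aval: "a = 1/3" by simp
  hence uval: "u = 2/3" using u1' by linarith
  have B: "\<forall>i\<in>{2<..d}. (real i - 1)^2 * (p i)^2 = (2*u+R)/d" and um: "u = (2*u+R)/d"
    using beq[OF eq1] by auto
  have xi0: "\<forall>i\<in>{2<..d}. (real i - 1)^2 * (p i)^2 = 2/3" using B um uval by simp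
  have p2: "(p 2)^2 = 1/3" using aval by (simp add: a_def)
  show ?thesis by (rule fin[OF d p1 ppos p2 xi0])
qed


end
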